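(* Let $D^p$ be an instance of a PDB schema $\mathcal{D}^p$ and $\mathcal{IC}$ a set of denial constraints. If $HG(D^p,\mathcal{IC})$ is a hypertree, then $D^p\models\mathcal{IC}$ if and only if for each hyperedge $e$ of $HG(D^p,\mathcal{IC})$, $\sum_{t\in e}p(t)\le |e|-1$.
   Context: A PDB instance $D^p$ is a finite set of tuples, each with a probability $p(t)\in[0,1]$. Possible worlds are subsets of its tuples; an interpretation is a probability distribution $Pr$ on the possible worlds with $\sum_{w\ni t}Pr(w)=p(t)$ for each tuple $t$. A denial constraint is $\forall\vec x.\neg[R_1(\vec x_1)\wedge\dots\wedge R_m(\vec x_m)\wedge\phi]$ with $\phi$ a conjunction of comparisons ($=,\neq,\le,\ge,<,>$) among variables/constants. A model w.r.t. $\mathcal{IC}$ is an interpretation giving probability $0$ to every world violating some constraint; $D^p\models\mathcal{IC}$ iff a model exists. A conflicting set is a minimal set of tuples such that every world containing all of it violates $\mathcal{IC}$; the conflict hypergraph $HG(D^p,\mathcal{IC})$ has the tuples as nodes and the conflicting sets as hyperedges. A path between nodes is a sequence of distinct hyperedges, consecutive ones intersecting, the first containing one node and the last the other. A hypergraph is a hypertree if it is connected and there are no two hyperedges $e_1,e_2$ such that, after deleting the nodes of $e_1\cap e_2$ from all hyperedges, a remaining node of $e_1$ is still connected to a remaining node of $e_2$ ($\gamma$-acyclicity). *)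

theory Defs
  imports Complex_Main
begin

type_synonym ('r, 'v) tuple = "'r \<times> 'v list"

datatype 'v dterm = Var nat | Const 'v

datatype cmp = Eq | Neq | Le | Ge | Lt | Gt

fun eval_term :: "(nat \<Rightarrow> 'v) \<Rightarrow> 'v dterm \<Rightarrow> 'v" where
  "eval_term \<nu> (Var n) = \<nu> n"
| "eval_term \<nu> (Const c) = c"

fun holds_cmp :: "cmp \<Rightarrow> 'v::linorder \<Rightarrow> 'v \<Rightarrow> bool" where
  "holds_cmp Eq a b = (a = b)"
| "holds_cmp Neq a b = (a \<noteq> b)"
| "holds_cmp Le a b = (a \<le> b)"
| "holds_cmp Ge a b = (a \<ge> b)"
| "holds_cmp Lt a b = (a < b)"
| "holds_cmp Gt a b = (a > b)"

text \<open>A denial constraint  forall x. not (R1(x1) and ... and Rm(xm) and phi):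
  a list of atoms (relation name, argument terms) and a list of comparisons.\<close>
type_synonym ('r, 'v) denial_constraint =
  "('r \<times> 'v dterm list) list \<times> ('v dterm \<times> cmp \<times> 'v dterm) list"

definition violates_dc :: "('r, 'v::linorder) tuple set \<Rightarrow> ('r, 'v) denial_constraint \<Rightarrow> bool" where
  "violates_dc w dc \<longleftrightarrow>
     (\<exists>\<nu>. (\<forall>(R, ts) \<in> set (fst dc). (R, map (eval_term \<nu>) ts) \<in> w) \<and>
          (\<forall>(s, c, t) \<in> set (snd dc). holds_cmp c (eval_term \<nu> s) (eval_term \<nu> t)))"

definition violates :: "('r, 'v::linorder) tuple set \<Rightarrow> ('r, 'v) denial_constraint set \<Rightarrow> bool" where
  "violates w IC \<longleftrightarrow> (\<exists>dc \<in> IC. violates_dc w dc)"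

text \<open>PDB instance: finite tuple set D with probabilities p t in [0,1].
  Possible worlds: subsets of D.  An interpretation is a probability distribution
  on the possible worlds whose marginals are p.\<close>
definition interpretation_of :: "'t set \<Rightarrow> ('t \<Rightarrow> real) \<Rightarrow> ('t set \<Rightarrow> real) \<Rightarrow> bool" where
  "interpretation_of D p Pr \<longleftrightarrow>
     (\<forall>w \<in> Pow D. Pr w \<ge> 0) \<and> (\<Sum>w \<in> Pow D. Pr w) = 1 \<and>
     (\<forall>t \<in> D. (\<Sum>w \<in> {w \<in> Pow D. t \<in> w}. Pr w) = p t)"

definition is_model :: "('r, 'v::linorder) tuple set \<Rightarrow> (('r, 'v) tuple \<Rightarrow> real)
    \<Rightarrow> ('r, 'v) denial_constraint set \<Rightarrow> (('r, 'v) tuple set \<Rightarrow> real) \<Rightarrow> bool" where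
  "is_model D p IC Pr \<longleftrightarrow> interpretation_of D p Pr \<and>
     (\<forall>w \<in> Pow D. violates w IC \<longrightarrow> Pr w = 0)"

definition pdb_models :: "('r, 'v::linorder) tuple set \<Rightarrow> (('r, 'v) tuple \<Rightarrow> real)
    \<Rightarrow> ('r, 'v) denial_constraint set \<Rightarrow> bool" where
  "pdb_models D p IC \<longleftrightarrow> (\<exists>Pr. is_model D p IC Pr)"

definition forces_violation :: "('r, 'v::linorder) tuple set \<Rightarrow> ('r, 'v) denial_constraint set
    \<Rightarrow> ('r, 'v) tuple set \<Rightarrow> bool" where
  "forces_violation D IC S \<longleftrightarrow> S \<subseteq> D \<and> (\<forall>w. S \<subseteq> w \<and> w \<subseteq> D \<longrightarrow> violates w IC)"

definition conflicting_set :: "('r, 'v::linorder) tuple set \<Rightarrow> ('r, 'v) denial_constraint set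
    \<Rightarrow> ('r, 'v) tuple set \<Rightarrow> bool" where
  "conflicting_set D IC S \<longleftrightarrow> forces_violation D IC S \<and>
     (\<forall>S'. S' \<subset> S \<longrightarrow> \<not> forces_violation D IC S')"

text \<open>Hyperedges of the conflict hypergraph HG(D^p, IC); its node set is D.\<close>
definition conflict_edges :: "('r, 'v::linorder) tuple set \<Rightarrow> ('r, 'v) denial_constraint set
    \<Rightarrow> ('r, 'v) tuple set set" where
  "conflict_edges D IC = {S. conflicting_set D IC S}"

definition hg_path :: "'a set set \<Rightarrow> 'a set list \<Rightarrow> 'a \<Rightarrow> 'a \<Rightarrow> bool" where
  "hg_path E es u v \<longleftrightarrow> es \<noteq> [] \<and> distinct es \<and> set es \<subseteq> E \<and>
     (\<forall>i. Suc i < length es \<longrightarrow> es ! i \<inter> es ! Suc i \<noteq> {}) \<and>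
     u \<in> hd es \<and> v \<in> last es"

definition hg_connected_nodes :: "'a set set \<Rightarrow> 'a \<Rightarrow> 'a \<Rightarrow> bool" where
  "hg_connected_nodes E u v \<longleftrightarrow> (\<exists>es. hg_path E es u v)"

definition hg_connected :: "'a set \<Rightarrow> 'a set set \<Rightarrow> bool" where
  "hg_connected V E \<longleftrightarrow> (\<forall>u \<in> V. \<forall>v \<in> V. u \<noteq> v \<longrightarrow> hg_connected_nodes E u v)"

text \<open>Hypertree (gamma-acyclic, connected): there are no two distinct intersecting hyperedges
  e1, e2 such that, after removing the nodes of e1 \<inter> e2 from every hyperedge, some
  remaining node of e1 is connected to some remaining node of e2.\<close>
definition hypertree :: "'a set \<Rightarrow> 'a set set \<Rightarrow> bool" where
  "hypertree V E \<longleftrightarrow> hg_connected V E \<and>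
     \<not> (\<exists>e1 \<in> E. \<exists>e2 \<in> E. e1 \<noteq> e2 \<and> e1 \<inter> e2 \<noteq> {} \<and>
          (\<exists>x \<in> e1 - (e1 \<inter> e2). \<exists>y \<in> e2 - (e1 \<inter> e2).
             hg_connected_nodes ((\<lambda>e. e - (e1 \<inter> e2)) ` E) x y))"

end

theory Submission
  imports Defs
begin


definition adj :: "'a set set \<Rightarrow> 'a \<Rightarrow> 'a \<Rightarrow> bool" where
  "adj E a b \<longleftrightarrow> (\<exists>e\<in>E. a \<in> e \<and> b \<in> e)"

definition gprop :: "'a set set \<Rightarrow> bool" where
  "gprop E \<longleftrightarrow> (\<forall>e1\<in>E. \<forall>e2\<in>E. e1 \<noteq> e2 \<longrightarrow> e1 \<inter> e2 \<noteq> {} \<longrightarrow>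
     (\<forall>x\<in>e1 - e1 \<inter> e2. \<forall>y\<in>e2 - e1 \<inter> e2. \<not> (adj ((\<lambda>e. e - e1 \<inter> e2) ` E))\<^sup>*\<^sup>* x y))"

definition nest :: "'a set set \<Rightarrow> 'a \<Rightarrow> bool" where
  "nest E z \<longleftrightarrow> (\<forall>h1\<in>E. \<forall>h2\<in>E. z \<in> h1 \<longrightarrow> z \<in> h2 \<longrightarrow> h1 \<subseteq> h2 \<or> h2 \<subseteq> h1)"

lemma trancl_path:
  assumes "(adj E)\<^sup>+\<^sup>+ x y" shows "\<exists>es. hg_path E es x y"
  using assms
proof (induction rule: tranclp_induct)
  case (base y)
  then obtain e where "e \<in> E" "x \<in> e" "y \<in> e" by (auto simp: adj_def)
  then have "hg_path E [e] x y" by (simp add: hg_path_def)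
  then show ?case by blast
next
  case (step y z)
  then obtain es where es: "hg_path E es x y" by blast
  from step obtain e where e: "e \<in> E" "y \<in> e" "z \<in> e" by (auto simp: adj_def)
  show ?case
  proof (cases "e \<in> set es")
    case True
    then obtain k where k: "k < length es" "es ! k = e" by (auto simp: in_set_conv_nth)
    let ?es = "take (Suc k) es"
    have "hg_path E ?es x z"
      unfolding hg_path_def
    proof (intro conjI allI impI)
      show "?es \<noteq> []" using k by (cases es) auto
      show "distinct ?es" using es by (simp add: hg_path_def)
      show "set ?es \<subseteq> E" using es set_take_subset[of "Suc k" es] by (auto simp: hg_path_def)
      fix i assume "Suc i < length ?es"
      then show "?es ! i \<inter> ?es ! Suc i \<noteq> {}" using es by (auto simp: hg_path_def)
    next
      show "x \<in> hd ?es" using es k by (auto simp: hg_path_def hd_conv_nth)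
      show "z \<in> last ?es" using k e by (simp add: take_Suc_conv_app_nth)
    qed
    then show ?thesis by blast
  next
    case False
    let ?es = "es @ [e]"
    have "hg_path E ?es x z"
      unfolding hg_path_def
    proof (intro conjI allI impI)
      show "?es \<noteq> []" by simp
      show "distinct ?es" using es False by (simp add: hg_path_def)
      show "set ?es \<subseteq> E" using es e by (auto simp: hg_path_def)
      fix i assume i: "Suc i < length ?es"
      show "?es ! i \<inter> ?es ! Suc i \<noteq> {}"
      proof (cases "Suc i < length es")
        case True
        then show ?thesis using es by (auto simp: hg_path_def nth_append)
      next
        case False
        then have "i = length es - 1" "es \<noteq> []" using i es by (auto simp: hg_path_def)
        then have "?es ! i = last es" "?es ! Suc i = e"
          by (auto simp: nth_append last_conv_nth)
        then show ?thesis using es e by (auto simp: hg_path_def)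
      qed
    next
      show "x \<in> hd ?es" using es by (auto simp: hg_path_def)
      show "z \<in> last ?es" using e by simp
    qed
    then show ?thesis by blast
  qed
qed

lemma hypertree_gprop:
  assumes "hypertree V E" shows "gprop E"
  unfolding gprop_def
proof (intro ballI impI notI)
  fix e1 e2 x y
  assume e: "e1 \<in> E" "e2 \<in> E" "e1 \<noteq> e2" "e1 \<inter> e2 \<noteq> {}" and x: "x \<in> e1 - e1 \<inter> e2"
    and y: "y \<in> e2 - e1 \<inter> e2" and c: "(adj ((\<lambda>e. e - e1 \<inter> e2) ` E))\<^sup>*\<^sup>* x y"
  have "x \<noteq> y" using x y by auto
  then have "(adj ((\<lambda>e. e - e1 \<inter> e2) ` E))\<^sup>+\<^sup>+ x y" using c rtranclpD by metis
  then have "hg_connected_nodes ((\<lambda>e. e - e1 \<inter> e2) ` E) x y"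
    using trancl_path hg_connected_nodes_def by metis
  then show False using assms e x y unfolding hypertree_def by blast
qed

lemma adj_rtranclp_mono:
  assumes "\<And>a b. adj E a b \<Longrightarrow> adj F a b" "(adj E)\<^sup>*\<^sup>* x y"
  shows "(adj F)\<^sup>*\<^sup>* x y"
  using assms(2) by (induction rule: rtranclp_induct) (auto intro: rtranclp.rtrancl_into_rtrancl assms(1))

lemma adj_sym: "adj E a b \<Longrightarrow> adj E b a" by (auto simp: adj_def)

lemma adj_rtranclp_sym: "(adj E)\<^sup>*\<^sup>* x y \<Longrightarrow> (adj E)\<^sup>*\<^sup>* y x"
  by (induction rule: rtranclp_induct) (auto intro: converse_rtranclp_into_rtranclp adj_sym)

lemma gprop_restrict:
  assumes "gprop E" shows "gprop ((\<lambda>h. h \<inter> W) ` E)"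
  unfolding gprop_def
proof (intro ballI impI notI)
  fix e1' e2' x y
  assume e1': "e1' \<in> (\<lambda>h. h \<inter> W) ` E" and e2': "e2' \<in> (\<lambda>h. h \<inter> W) ` E"
    and ne: "e1' \<noteq> e2'" and int: "e1' \<inter> e2' \<noteq> {}" and x: "x \<in> e1' - e1' \<inter> e2'"
    and y: "y \<in> e2' - e1' \<inter> e2'"
    and c: "(adj ((\<lambda>e. e - e1' \<inter> e2') ` (\<lambda>h. h \<inter> W) ` E))\<^sup>*\<^sup>* x y"
  obtain e1 where e1: "e1 \<in> E" "e1' = e1 \<inter> W" using e1' by blast
  obtain e2 where e2: "e2 \<in> E" "e2' = e2 \<inter> W" using e2' by blast
  have "(adj ((\<lambda>e. e - e1 \<inter> e2) ` E))\<^sup>*\<^sup>* x y"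
    by (rule adj_rtranclp_mono[OF _ c]) (auto simp: adj_def e1 e2)
  moreover have "e1 \<noteq> e2" "e1 \<inter> e2 \<noteq> {}" "x \<in> e1 - e1 \<inter> e2" "y \<in> e2 - e1 \<inter> e2"
    using ne int x y e1 e2 by auto
  ultimately show False using assms e1 e2 unfolding gprop_def by blast
qed

lemma gprop_subset:
  assumes "gprop E" "E' \<subseteq> E" shows "gprop E'"
  unfolding gprop_def
proof (intro ballI impI notI)
  fix e1 e2 x y
  assume e: "e1 \<in> E'" "e2 \<in> E'" "e1 \<noteq> e2" "e1 \<inter> e2 \<noteq> {}" "x \<in> e1 - e1 \<inter> e2"
    "y \<in> e2 - e1 \<inter> e2" and c: "(adj ((\<lambda>e. e - e1 \<inter> e2) ` E'))\<^sup>*\<^sup>* x y"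
  have "(adj ((\<lambda>e. e - e1 \<inter> e2) ` E))\<^sup>*\<^sup>* x y"
    by (rule adj_rtranclp_mono[OF _ c]) (use assms(2) in \<open>auto simp: adj_def\<close>)
  then show False using assms e unfolding gprop_def by blast
qed

lemma nest_restrict:
  assumes "nest ((\<lambda>h. h \<inter> W) ` E) z" "\<forall>h\<in>E. z \<in> h \<longrightarrow> h \<subseteq> W"
  shows "nest E z"
  unfolding nest_def
proof (intro ballI impI)
  fix h1 h2 assume h: "h1 \<in> E" "h2 \<in> E" "z \<in> h1" "z \<in> h2"
  have "h1 \<inter> W = h1" "h2 \<inter> W = h2" using h assms(2) by auto
  then show "h1 \<subseteq> h2 \<or> h2 \<subseteq> h1" using assms(1) h unfolding nest_def
    by (metis image_eqI)
qed

lemma nest_universal: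
  assumes "nest (E - {g}) z" "\<Union>E \<subseteq> g"
  shows "nest E z"
  using assms unfolding nest_def by blast



lemma rtranclp_last_edge:
  assumes "(adj G)\<^sup>*\<^sup>* y c" "y \<noteq> c" shows "c \<in> \<Union>G"
  using assms by (cases rule: rtranclp.cases) (auto simp: adj_def)

lemma claim_np:
  assumes "finite (\<Union>E)" "gprop E"
  shows "(\<forall>f\<in>E. \<forall>x\<in>\<Union>E - f. \<exists>z\<in>\<Union>E - f. nest E z) \<and> (\<Union>E \<noteq> {} \<longrightarrow> (\<exists>z\<in>\<Union>E. nest E z))"
  using assms
proof (induction "card (\<Union>E) + card E" arbitrary: E rule: less_induct)
  case less
  have finE: "finite E" using less.prems(1) by (rule finite_UnionD)
  note IH = less.hyps
  have A: "\<forall>f\<in>E. \<forall>x\<in>\<Union>E - f. \<exists>z\<in>\<Union>E - f. nest E z"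
  proof (intro ballI)
    fix f x assume f: "f \<in> E" and x: "x \<in> \<Union>E - f"
    obtain g where g: "g \<in> {h\<in>E. f \<subseteq> h}" and gmax0: "\<forall>h\<in>{h\<in>E. f \<subseteq> h}. g \<subseteq> h \<longrightarrow> g = h"
      using finite_has_maximal2[of "{h\<in>E. f \<subseteq> h}" f] finE f by auto
    have gE: "g \<in> E" and fg: "f \<subseteq> g" using g by auto
    have gmax: "\<And>h. h \<in> E \<Longrightarrow> g \<subseteq> h \<Longrightarrow> h = g" using gmax0 fg by auto
    show "\<exists>z\<in>\<Union>E - f. nest E z"
    proof (cases "\<Union>E \<subseteq> g")
      case True
      define E' where "E' = E - {g}"
      show ?thesis
      proof (cases "\<exists>z\<in>\<Union>E - f. z \<notin> \<Union>E'")
        case True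
        then obtain z where z: "z \<in> \<Union>E - f" "z \<notin> \<Union>E'" by blast
        have "nest E z" using z unfolding nest_def E'_def by blast
        then show ?thesis using z by blast
      next
        case False
        have fg': "f \<noteq> g" using x True by auto
        have "x \<in> \<Union>E' - f" using False x by blast
        moreover have "f \<in> E'" using f fg' E'_def by auto
        moreover have lt: "card (\<Union>E') + card E' < card (\<Union>E) + card E"
        proof -
          have "card (\<Union>E') \<le> card (\<Union>E)" using less.prems(1) E'_def
            by (intro card_mono) auto
          moreover have "card E' < card E" unfolding E'_def by (rule card_Diff1_less[OF finE gE])
          ultimately show ?thesis by linarith
        qed
        moreover have fin': "finite (\<Union>E')" unfolding E'_def by (rule finite_subset[OF _ less.prems(1)]) auto
        moreover have gp': "gprop E'" by (rule gprop_subset[OF less.prems(2)]) (auto simp: E'_def)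
        ultimately obtain z where z: "z \<in> \<Union>E' - f" "nest E' z" using IH[OF lt fin' gp'] by blast
        have "nest E z" using nest_universal[of E g z] z True E'_def by blast
        then show ?thesis using z E'_def by blast
      qed
    next
      case False
      then obtain x' where x': "x' \<in> \<Union>E" "x' \<notin> g" by blast
      have "\<exists>z\<in>\<Union>E - g. nest E z"
      proof (cases "\<exists>g2\<in>E. g2 \<inter> g \<noteq> {} \<and> \<not> g2 \<subseteq> g")
        case True
        then obtain g2 where g2: "g2 \<in> E" "g2 \<inter> g \<noteq> {}" "\<not> g2 \<subseteq> g" by blast
        have ngg2: "\<not> g \<subseteq> g2" using gmax g2 by blast
        have ne: "g \<noteq> g2" using g2 by auto
        define I where "I = g \<inter> g2"
        have Ine: "I \<noteq> {}" using g2 I_def by auto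
        obtain y where y: "y \<in> g2" "y \<notin> g" using g2 by auto
        define G where "G = (\<lambda>h. h - I) ` E"
        have sep: "\<not> (adj G)\<^sup>*\<^sup>* a y" if "a \<in> g - I" for a
        proof -
          have "\<forall>x\<in>g - g \<inter> g2. \<forall>y\<in>g2 - g \<inter> g2. \<not> (adj ((\<lambda>e. e - g \<inter> g2) ` E))\<^sup>*\<^sup>* x y"
            using less.prems(2) gE g2(1) ne Ine unfolding gprop_def I_def by blast
          moreover have "a \<in> g - g \<inter> g2" "y \<in> g2 - g \<inter> g2" using that y I_def by auto
          ultimately show ?thesis unfolding G_def I_def by blast
        qed
        define C where "C = {c. (adj G)\<^sup>*\<^sup>* y c}"
        have Cg: "C \<inter> g = {}"
        proof (rule ccontr)
          assume "C \<inter> g \<noteq> {}"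
          then obtain c where c: "c \<in> C" "c \<in> g" by blast
          have cy: "(adj G)\<^sup>*\<^sup>* y c" using c C_def by simp
          have "y \<noteq> c" using y c by auto
          then have "c \<in> \<Union>G" using rtranclp_last_edge cy by metis
          then have "c \<notin> I" using G_def by auto
          then show False using sep[of c] c adj_rtranclp_sym[OF cy] by blast
        qed
        define W where "W = C \<union> I"
        define EW where "EW = (\<lambda>h. h \<inter> W) ` E"
        have gW: "g \<inter> W = I" using Cg I_def W_def by auto
        have IEW: "I \<in> EW" using gW gE EW_def by (metis image_eqI)
        have yC: "y \<in> C" using C_def by simp
        have yEW: "y \<in> \<Union>EW - I" using y g2 yC EW_def W_def I_def by auto
        have sub: "\<Union>EW \<subseteq> \<Union>E" using EW_def by auto
        obtain u where u: "u \<in> g" "u \<notin> g2" using ngg2 by auto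
        have "u \<notin> W" using u Cg I_def W_def by auto
        then have "u \<notin> \<Union>EW" using EW_def by auto
        moreover have "u \<in> \<Union>E" using u gE by auto
        ultimately have "\<Union>EW \<subset> \<Union>E" using sub by blast
        then have "card (\<Union>EW) < card (\<Union>E)" by (rule psubset_card_mono[OF less.prems(1)])
        moreover have "card EW \<le> card E" using EW_def finE by (simp add: card_image_le)
        ultimately have lt: "card (\<Union>EW) + card EW < card (\<Union>E) + card E" by linarith
        have finEW: "finite (\<Union>EW)" using sub less.prems(1) by (rule finite_subset)
        have gpEW: "gprop EW" unfolding EW_def by (rule gprop_restrict[OF less.prems(2)])
        obtain z where z: "z \<in> \<Union>EW - I" "nest EW z" using IH[OF lt finEW gpEW] IEW yEW by blast
        have zC: "z \<in> C" using z unfolding EW_def W_def by blast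
        have hW: "\<forall>h\<in>E. z \<in> h \<longrightarrow> h \<subseteq> W"
        proof (intro ballI impI subsetI)
          fix h w assume h: "h \<in> E" "z \<in> h" "w \<in> h"
          show "w \<in> W"
          proof (cases "w \<in> I")
            case True then show ?thesis unfolding W_def by simp
          next
            case False
            have "z \<notin> I" using z by auto
            have hG: "h - I \<in> G" using h(1) unfolding G_def by (rule imageI)
            have "z \<in> h - I" "w \<in> h - I" using h \<open>z \<notin> I\<close> False by auto
            then have "adj G z w" using hG unfolding adj_def by blast
            moreover have "(adj G)\<^sup>*\<^sup>* y z" using zC unfolding C_def by simp
            ultimately have "(adj G)\<^sup>*\<^sup>* y w" by (simp add: rtranclp.rtrancl_into_rtrancl)
            then show ?thesis unfolding W_def C_def by simp
          qed
        qed
        have "nest E z" using nest_restrict[of W E z] z(2) hW unfolding EW_def by blast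
        moreover have "z \<in> \<Union>E - g" using zC Cg z sub by blast
        ultimately show ?thesis by blast
      next
        case False
        then have disj: "\<And>h. h \<in> E \<Longrightarrow> h \<inter> g = {} \<or> h \<subseteq> g" by blast
        have gne: "g \<noteq> {}"
        proof
          assume "g = {}"
          obtain h where h: "h \<in> E" "x' \<in> h" using x'(1) by blast
          have "g \<subseteq> h" using \<open>g = {}\<close> by simp
          then have "h = g" using gmax h(1) by blast
          then show False using h(2) \<open>g = {}\<close> by simp
        qed
        define EW where "EW = (\<lambda>h. h \<inter> - g) ` E"
        have sub: "\<Union>EW = \<Union>E - g" using EW_def by auto
        have "\<Union>EW \<subset> \<Union>E" using sub gne gE by auto
        then have "card (\<Union>EW) < card (\<Union>E)" by (rule psubset_card_mono[OF less.prems(1)])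
        moreover have "card EW \<le> card E" using EW_def finE by (simp add: card_image_le)
        ultimately have lt: "card (\<Union>EW) + card EW < card (\<Union>E) + card E" by linarith
        have finEW: "finite (\<Union>EW)" unfolding sub using less.prems(1) by (rule finite_Diff)
        have gpEW: "gprop EW" unfolding EW_def by (rule gprop_restrict[OF less.prems(2)])
        have "\<Union>EW \<noteq> {}" unfolding sub using x' by blast
        then obtain z where z: "z \<in> \<Union>EW" "nest EW z" using IH[OF lt finEW gpEW] by blast
        have "\<forall>h\<in>E. z \<in> h \<longrightarrow> h \<subseteq> - g"
        proof (intro ballI impI)
          fix h assume h: "h \<in> E" "z \<in> h"
          then have "h \<inter> g = {}" using disj[of h] z sub by auto
          then show "h \<subseteq> - g" by auto
        qed
        then have "nest E z" using nest_restrict[of "- g" E z] z(2) unfolding EW_def by blast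
        moreover have "z \<in> \<Union>E - g" using z(1) sub by blast
        ultimately show ?thesis by blast
      qed
      then show ?thesis using fg by blast
    qed
  qed
  moreover have "\<Union>E \<noteq> {} \<longrightarrow> (\<exists>z\<in>\<Union>E. nest E z)"
  proof
    assume ne: "\<Union>E \<noteq> {}"
    then obtain h0 where h0: "h0 \<in> E" by blast
    obtain h1 where h1: "h1 \<in> E" and h1max: "\<forall>h\<in>E. h1 \<subseteq> h \<longrightarrow> h1 = h"
      using finite_has_maximal2[of E h0] finE h0 by auto
    show "\<exists>z\<in>\<Union>E. nest E z"
    proof (cases "\<Union>E - h1 = {}")
      case False
      then obtain x where "x \<in> \<Union>E - h1" by blast
      then show ?thesis using A h1 by blast
    next
      case True
      define E' where "E' = E - {h1}"
      show ?thesis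
      proof (cases "\<Union>E' = {}")
        case True
        obtain z where z: "z \<in> \<Union>E" using ne by blast
        have "nest E z" using True unfolding nest_def E'_def by blast
        then show ?thesis using z by blast
      next
        case False
        have "card (\<Union>E') \<le> card (\<Union>E)" using less.prems(1) E'_def
          by (intro card_mono) auto
        moreover have "card E' < card E" unfolding E'_def by (rule card_Diff1_less[OF finE h1])
        ultimately have lt: "card (\<Union>E') + card E' < card (\<Union>E) + card E" by linarith
        have "finite (\<Union>E')" unfolding E'_def by (rule finite_subset[OF _ less.prems(1)]) auto
        moreover have "gprop E'" by (rule gprop_subset[OF less.prems(2)]) (auto simp: E'_def)
        ultimately obtain z where z: "z \<in> \<Union>E'" "nest E' z" using IH[OF lt] False by blast
        have "nest E z" using nest_universal[of E h1 z] z True E'_def by blast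
        then show ?thesis using z E'_def by blast
      qed
    qed
  qed
  ultimately show ?case by blast
qed



lemma chain_fill:
  fixes P :: "'w \<Rightarrow> real"
  assumes "finite \<Omega>" "\<forall>\<omega>\<in>\<Omega>. 0 \<le> P \<omega>" "finite \<A>" "\<forall>A\<in>\<A>. A \<subseteq> \<Omega>"
    "\<forall>A\<in>\<A>. \<forall>B\<in>\<A>. A \<subseteq> B \<or> B \<subseteq> A" "0 \<le> q" "q \<le> sum P \<Omega>"
  shows "\<exists>\<gamma>. (\<forall>\<omega>\<in>\<Omega>. 0 \<le> \<gamma> \<omega> \<and> \<gamma> \<omega> \<le> 1) \<and> (\<Sum>\<omega>\<in>\<Omega>. P \<omega> * \<gamma> \<omega>) = q \<and>
    (\<forall>A\<in>\<A>. (\<Sum>\<omega>\<in>A. P \<omega> * \<gamma> \<omega>) \<le> max 0 (q - sum P \<Omega> + sum P A))"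
  using assms
proof (induction "card \<A>" arbitrary: \<A> \<Omega> q rule: less_induct)
  case less
  show ?case
  proof (cases "\<A> = {}")
    case True
    define M where "M = sum P \<Omega>"
    define \<gamma> where "\<gamma> = (\<lambda>\<omega>::'w. if M = 0 then 0 else q / M)"
    have M0: "0 \<le> M" using less.prems(2) unfolding M_def by (simp add: sum_nonneg)
    have tot: "(\<Sum>\<omega>\<in>\<Omega>. P \<omega> * \<gamma> \<omega>) = q"
    proof (cases "M = 0")
      case True
      then show ?thesis using less.prems(6,7) M_def \<gamma>_def by simp
    next
      case False
      have "(\<Sum>\<omega>\<in>\<Omega>. P \<omega> * \<gamma> \<omega>) = (\<Sum>\<omega>\<in>\<Omega>. P \<omega>) * (q / M)"
        unfolding \<gamma>_def using False by (simp add: sum_distrib_right sum_divide_distrib[symmetric])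
      then show ?thesis using False M_def by simp
    qed
    have "\<forall>\<omega>\<in>\<Omega>. 0 \<le> \<gamma> \<omega> \<and> \<gamma> \<omega> \<le> 1"
      using M0 less.prems(6,7) M_def \<gamma>_def by auto
    then show ?thesis using tot True by blast
  next
    case False
    obtain A1 where A1: "A1 \<in> \<A>" "\<forall>B\<in>\<A>. A1 \<subseteq> B \<longrightarrow> A1 = B"
      using finite_has_maximal2[of \<A>] less.prems(3) False by blast
    have A1max: "\<forall>B\<in>\<A>. B \<subseteq> A1" using A1 less.prems(5) by blast
    have A1O: "A1 \<subseteq> \<Omega>" using A1 less.prems(4) by blast
    define R where "R = sum P (\<Omega> - A1)"
    have split: "sum P \<Omega> = sum P A1 + R"
      unfolding R_def using sum.subset_diff[OF A1O less.prems(1), of P] by linarith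
    have R0: "0 \<le> R" unfolding R_def using less.prems(2) by (intro sum_nonneg) auto
    show ?thesis
    proof (cases "q \<le> R")
      case True
      define \<gamma> where "\<gamma> = (\<lambda>\<omega>. if \<omega> \<in> A1 then 0 else if R = 0 then 0 else q / R)"
      have s1: "(\<Sum>\<omega>\<in>A1. P \<omega> * \<gamma> \<omega>) = 0" unfolding \<gamma>_def by simp
      have s2: "(\<Sum>\<omega>\<in>\<Omega> - A1. P \<omega> * \<gamma> \<omega>) = q"
      proof (cases "R = 0")
        case True
        then show ?thesis using \<open>q \<le> R\<close> less.prems(6) \<gamma>_def by simp
      next
        case False
        have "(\<Sum>\<omega>\<in>\<Omega> - A1. P \<omega> * \<gamma> \<omega>) = (\<Sum>\<omega>\<in>\<Omega> - A1. P \<omega> * (q / R))"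
          unfolding \<gamma>_def using False by (intro sum.cong) auto
        also have "\<dots> = R * (q / R)" unfolding R_def by (rule sum_distrib_right[symmetric])
        finally show ?thesis using False by simp
      qed
      have tot: "(\<Sum>\<omega>\<in>\<Omega>. P \<omega> * \<gamma> \<omega>) = q"
        using sum.subset_diff[OF A1O less.prems(1), of "\<lambda>\<omega>. P \<omega> * \<gamma> \<omega>"] s1 s2 by simp
      have bnd: "\<forall>\<omega>\<in>\<Omega>. 0 \<le> \<gamma> \<omega> \<and> \<gamma> \<omega> \<le> 1"
        using True less.prems(6) R0 unfolding \<gamma>_def by auto
      have "\<forall>A\<in>\<A>. (\<Sum>\<omega>\<in>A. P \<omega> * \<gamma> \<omega>) \<le> max 0 (q - sum P \<Omega> + sum P A)"
      proof
        fix A assume "A \<in> \<A>"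
        then have "A \<subseteq> A1" using A1max by blast
        then have "(\<Sum>\<omega>\<in>A. P \<omega> * \<gamma> \<omega>) = 0" unfolding \<gamma>_def by (intro sum.neutral) auto
        then show "(\<Sum>\<omega>\<in>A. P \<omega> * \<gamma> \<omega>) \<le> max 0 (q - sum P \<Omega> + sum P A)" by simp
      qed
      then show ?thesis using tot bnd by blast
    next
      case False
      define \<A>' where "\<A>' = \<A> - {A1}"
      have lt: "card \<A>' < card \<A>" unfolding \<A>'_def by (rule card_Diff1_less[OF less.prems(3) A1(1)])
      have p1: "finite A1" using A1O less.prems(1) by (rule finite_subset)
      have p2: "\<forall>\<omega>\<in>A1. 0 \<le> P \<omega>" using A1O less.prems(2) by blast
      have p3: "finite \<A>'" unfolding \<A>'_def using less.prems(3) by simp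
      have p4: "\<forall>A\<in>\<A>'. A \<subseteq> A1" unfolding \<A>'_def using A1max by blast
      have p5: "\<forall>A\<in>\<A>'. \<forall>B\<in>\<A>'. A \<subseteq> B \<or> B \<subseteq> A" unfolding \<A>'_def using less.prems(5) by blast
      have p6: "0 \<le> q - R" using False by simp
      have p7: "q - R \<le> sum P A1" using less.prems(7) split by simp
      obtain \<gamma>' where g': "\<forall>\<omega>\<in>A1. 0 \<le> \<gamma>' \<omega> \<and> \<gamma>' \<omega> \<le> 1" "(\<Sum>\<omega>\<in>A1. P \<omega> * \<gamma>' \<omega>) = q - R"
        "\<forall>A\<in>\<A>'. (\<Sum>\<omega>\<in>A. P \<omega> * \<gamma>' \<omega>) \<le> max 0 (q - R - sum P A1 + sum P A)"
        using less.hyps[OF lt p1 p2 p3 p4 p5 p6 p7] by blast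
      define \<gamma> where "\<gamma> = (\<lambda>\<omega>. if \<omega> \<in> A1 then \<gamma>' \<omega> else 1)"
      have s1: "(\<Sum>\<omega>\<in>A1. P \<omega> * \<gamma> \<omega>) = q - R"
        using g'(2) unfolding \<gamma>_def by (simp cong: sum.cong)
      have s2: "(\<Sum>\<omega>\<in>\<Omega> - A1. P \<omega> * \<gamma> \<omega>) = R"
        unfolding \<gamma>_def R_def by (intro sum.cong) auto
      have tot: "(\<Sum>\<omega>\<in>\<Omega>. P \<omega> * \<gamma> \<omega>) = q"
        using sum.subset_diff[OF A1O less.prems(1), of "\<lambda>\<omega>. P \<omega> * \<gamma> \<omega>"] s1 s2 by simp
      have bnd: "\<forall>\<omega>\<in>\<Omega>. 0 \<le> \<gamma> \<omega> \<and> \<gamma> \<omega> \<le> 1"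
        using g'(1) unfolding \<gamma>_def by auto
      have "\<forall>A\<in>\<A>. (\<Sum>\<omega>\<in>A. P \<omega> * \<gamma> \<omega>) \<le> max 0 (q - sum P \<Omega> + sum P A)"
      proof
        fix A assume A: "A \<in> \<A>"
        show "(\<Sum>\<omega>\<in>A. P \<omega> * \<gamma> \<omega>) \<le> max 0 (q - sum P \<Omega> + sum P A)"
        proof (cases "A = A1")
          case True
          then show ?thesis using s1 split by simp
        next
          case False
          then have "A \<in> \<A>'" "A \<subseteq> A1" using A A1max \<A>'_def by auto
          moreover have "(\<Sum>\<omega>\<in>A. P \<omega> * \<gamma> \<omega>) = (\<Sum>\<omega>\<in>A. P \<omega> * \<gamma>' \<omega>)"
            using \<open>A \<subseteq> A1\<close> unfolding \<gamma>_def by (intro sum.cong) auto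
          ultimately show ?thesis using g'(3) split by force
        qed
      qed
      then show ?thesis using tot bnd by blast
    qed
  qed
qed



lemma sum_Pow_insert:
  assumes "finite A" "v \<notin> A"
  shows "(\<Sum>w\<in>Pow (insert v A). f w) = (\<Sum>w\<in>Pow A. f w + f (insert v w))"
proof -
  have "(\<Sum>w\<in>Pow (insert v A). f w) = (\<Sum>w\<in>Pow A. f w) + (\<Sum>w\<in>insert v ` Pow A. f w)"
    unfolding Pow_insert by (rule sum.union_disjoint) (use assms in auto)
  moreover have "inj_on (insert v) (Pow A)"
    unfolding inj_on_def using assms(2) by (metis Diff_insert_absorb PowD subsetD)
  then have "(\<Sum>w\<in>insert v ` Pow A. f w) = (\<Sum>w\<in>Pow A. f (insert v w))"
    by (simp add: sum.reindex)
  ultimately show ?thesis by (simp add: sum.distrib)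
qed

lemma G:
  fixes p :: "'a \<Rightarrow> real" and C :: "('a set \<times> real) set"
  assumes "finite V" "\<forall>(S,b)\<in>C. S \<subseteq> V \<and> 0 \<le> b \<and> 1 - b \<le> (\<Sum>t\<in>S. 1 - p t)"
    "\<forall>t\<in>V. 0 \<le> p t \<and> p t \<le> 1" "gprop (fst ` C)"
  shows "\<exists>P. (\<forall>w\<in>Pow V. 0 \<le> P w) \<and> (\<Sum>w\<in>Pow V. P w) = 1 \<and>
    (\<forall>t\<in>V. (\<Sum>w\<in>Pow V. if t \<in> w then P w else 0) = p t) \<and>
    (\<forall>(S,b)\<in>C. (\<Sum>w\<in>Pow V. if S \<subseteq> w then P w else 0) \<le> b)"
  using assms(1,2,3,4)
proof (induction V arbitrary: C rule: finite_remove_induct)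
  case empty
  have "\<forall>(S,b)\<in>C. (\<Sum>w\<in>Pow {}. if S \<subseteq> w then (1::real) else 0) \<le> b"
  proof (intro ballI, clarify)
    fix S b assume "(S, b) \<in> C"
    then have "S = {}" "1 - b \<le> 0" using empty.prems(1) by auto
    then show "(\<Sum>w\<in>Pow {}. if S \<subseteq> w then (1::real) else 0) \<le> b" by simp
  qed
  then show ?case by (intro exI[of _ "\<lambda>w. 1"]) simp
next
  case (remove V)
  have SV: "\<And>S b. (S, b) \<in> C \<Longrightarrow> S \<subseteq> V" using remove.prems(1) by blast
  have Usub: "\<Union>(fst ` C) \<subseteq> V" using SV by force
  obtain v where v: "v \<in> V" "nest (fst ` C) v"
  proof (cases "V \<subseteq> \<Union>(fst ` C)")
    case True
    have "finite (\<Union>(fst ` C))" using Usub remove.hyps(1) by (rule finite_subset)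
    moreover have "\<Union>(fst ` C) \<noteq> {}" using True remove.hyps(2) by blast
    ultimately obtain z where "z \<in> \<Union>(fst ` C)" "nest (fst ` C) z"
      using claim_np[OF _ remove.prems(3)] by blast
    then show ?thesis using that Usub by blast
  next
    case False
    then obtain z where z: "z \<in> V" "z \<notin> \<Union>(fst ` C)" by blast
    then have "nest (fst ` C) z" unfolding nest_def by blast
    then show ?thesis using that z by blast
  qed
  define V' where "V' = V - {v}"
  have finV': "finite V'" using remove.hyps(1) V'_def by simp
  have VV': "V = insert v V'" "v \<notin> V'" using v V'_def by auto
  define C' where "C' = (\<lambda>(S,b). (S - {v}, if v \<in> S then b + 1 - p v else b)) ` C"
  have pv: "0 \<le> p v" "p v \<le> 1" using remove.prems(2) v by auto
  have h1: "\<forall>(S,b)\<in>C'. S \<subseteq> V - {v} \<and> 0 \<le> b \<and> 1 - b \<le> (\<Sum>t\<in>S. 1 - p t)"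
  proof
    fix x assume "x \<in> C'"
    then obtain S b where Sb: "(S, b) \<in> C" and x: "x = (S - {v}, if v \<in> S then b + 1 - p v else b)"
      unfolding C'_def by auto
    then have S: "S \<subseteq> V" "0 \<le> b" "1 - b \<le> (\<Sum>t\<in>S. 1 - p t)" using remove.prems(1) by auto
    have finS: "finite S" using S(1) remove.hyps(1) by (rule finite_subset)
    have "S - {v} \<subseteq> V - {v} \<and> 0 \<le> (if v \<in> S then b + 1 - p v else b) \<and>
          1 - (if v \<in> S then b + 1 - p v else b) \<le> (\<Sum>t\<in>S - {v}. 1 - p t)"
    proof (cases "v \<in> S")
      case True
      have "(\<Sum>t\<in>S. 1 - p t) = (1 - p v) + (\<Sum>t\<in>S - {v}. 1 - p t)"
        using sum.remove[OF finS True] by simp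
      then show ?thesis using S True pv by auto
    next
      case False
      then show ?thesis using S by auto
    qed
    then show "case x of (S, b) \<Rightarrow> S \<subseteq> V - {v} \<and> 0 \<le> b \<and> 1 - b \<le> (\<Sum>t\<in>S. 1 - p t)"
      unfolding x by simp
  qed
  have h2: "\<forall>t\<in>V - {v}. 0 \<le> p t \<and> p t \<le> 1" using remove.prems(2) by blast
  have fstC': "fst ` C' = (\<lambda>h. h \<inter> - {v}) ` (fst ` C)"
    unfolding C'_def image_image by (rule image_cong) (auto simp: split_beta)
  have h3: "gprop (fst ` C')" unfolding fstC' by (rule gprop_restrict[OF remove.prems(3)])
  obtain P' where P': "\<forall>w\<in>Pow V'. 0 \<le> P' w" "(\<Sum>w\<in>Pow V'. P' w) = 1"
    "\<forall>t\<in>V'. (\<Sum>w\<in>Pow V'. if t \<in> w then P' w else 0) = p t"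
    "\<forall>(S,b)\<in>C'. (\<Sum>w\<in>Pow V'. if S \<subseteq> w then P' w else 0) \<le> b"
    using remove.IH[OF v(1) h1 h2 h3] unfolding V'_def by blast
  define \<A> where "\<A> = (\<lambda>S. {w \<in> Pow V'. S - {v} \<subseteq> w}) ` {S \<in> fst ` C. v \<in> S}"
  have "fst ` C \<subseteq> Pow V" using SV by force
  then have finC: "finite (fst ` C)" using remove.hyps(1) by (simp add: finite_subset)
  have chain: "\<forall>A\<in>\<A>. \<forall>B\<in>\<A>. A \<subseteq> B \<or> B \<subseteq> A"
  proof (intro ballI)
    fix A B assume "A \<in> \<A>" "B \<in> \<A>"
    then obtain S1 S2 where S: "S1 \<in> fst ` C" "v \<in> S1" "A = {w \<in> Pow V'. S1 - {v} \<subseteq> w}"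
      "S2 \<in> fst ` C" "v \<in> S2" "B = {w \<in> Pow V'. S2 - {v} \<subseteq> w}" unfolding \<A>_def by blast
    have "S1 \<subseteq> S2 \<or> S2 \<subseteq> S1" using v(2) S unfolding nest_def by blast
    then show "A \<subseteq> B \<or> B \<subseteq> A" using S by blast
  qed
  obtain \<gamma> where g: "\<forall>\<omega>\<in>Pow V'. 0 \<le> \<gamma> \<omega> \<and> \<gamma> \<omega> \<le> 1" "(\<Sum>\<omega>\<in>Pow V'. P' \<omega> * \<gamma> \<omega>) = p v"
    "\<forall>A\<in>\<A>. (\<Sum>\<omega>\<in>A. P' \<omega> * \<gamma> \<omega>) \<le> max 0 (p v - sum P' (Pow V') + sum P' A)"
    using chain_fill[of "Pow V'" P' \<A> "p v"] finV' P'(1,2) finC chain pv unfolding \<A>_def by auto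
  define P where "P = (\<lambda>w. P' (w - {v}) * (if v \<in> w then \<gamma> (w - {v}) else 1 - \<gamma> (w - {v})))"
  have sumV: "(\<Sum>w\<in>Pow V. f w) = (\<Sum>w\<in>Pow V'. f w + f (insert v w))" for f :: "'a set \<Rightarrow> real"
    unfolding VV'(1) by (rule sum_Pow_insert[OF finV' VV'(2)])
  have Pw: "P w = P' w * (1 - \<gamma> w)" "P (insert v w) = P' w * \<gamma> w" if "w \<in> Pow V'" for w
  proof -
    have "v \<notin> w" using that VV'(2) by auto
    then show "P w = P' w * (1 - \<gamma> w)" "P (insert v w) = P' w * \<gamma> w" unfolding P_def by auto
  qed
  have c1: "\<forall>w\<in>Pow V. 0 \<le> P w"
  proof
    fix w assume w: "w \<in> Pow V"
    then have "w - {v} \<in> Pow V'" using V'_def by auto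
    then show "0 \<le> P w" unfolding P_def using P'(1) g(1) by auto
  qed
  have c2: "(\<Sum>w\<in>Pow V. P w) = 1"
  proof -
    have "(\<Sum>w\<in>Pow V'. P w + P (insert v w)) = (\<Sum>w\<in>Pow V'. P' w)"
      by (intro sum.cong refl) (simp add: Pw algebra_simps)
    then show ?thesis unfolding sumV using P'(2) by simp
  qed
  have c3: "\<forall>t\<in>V. (\<Sum>w\<in>Pow V. if t \<in> w then P w else 0) = p t"
  proof
    fix t assume t: "t \<in> V"
    show "(\<Sum>w\<in>Pow V. if t \<in> w then P w else 0) = p t"
    proof (cases "t = v")
      case True
      have "(\<Sum>w\<in>Pow V. if t \<in> w then P w else 0) = (\<Sum>w\<in>Pow V'. P' w * \<gamma> w)"
        unfolding sumV using VV'(2) True by (intro sum.cong) (auto simp: Pw)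
      then show ?thesis using g(2) True by simp
    next
      case False
      then have "t \<in> V'" using t V'_def by auto
      have "(\<Sum>w\<in>Pow V. if t \<in> w then P w else 0) = (\<Sum>w\<in>Pow V'. if t \<in> w then P' w else 0)"
        unfolding sumV using False by (intro sum.cong) (auto simp: Pw algebra_simps)
      then show ?thesis using P'(3) \<open>t \<in> V'\<close> by simp
    qed
  qed
  have c4: "\<forall>(S,b)\<in>C. (\<Sum>w\<in>Pow V. if S \<subseteq> w then P w else 0) \<le> b"
  proof (intro ballI, clarify)
    fix S b assume Sb: "(S, b) \<in> C"
    then have b0: "0 \<le> b" using remove.prems(1) by auto
    show "(\<Sum>w\<in>Pow V. if S \<subseteq> w then P w else 0) \<le> b"
    proof (cases "v \<in> S")
      case False
      have "(S, b) \<in> C'" unfolding C'_def by (rule image_eqI[where x="(S,b)"]) (use False Sb in auto)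
      moreover have "(\<Sum>w\<in>Pow V. if S \<subseteq> w then P w else 0) = (\<Sum>w\<in>Pow V'. if S \<subseteq> w then P' w else 0)"
        unfolding sumV using False by (intro sum.cong) (auto simp: Pw algebra_simps subset_insert)
      ultimately show ?thesis using P'(4) by fastforce
    next
      case True
      define A where "A = {w \<in> Pow V'. S - {v} \<subseteq> w}"
      have "S \<in> {S \<in> fst ` C. v \<in> S}" using Sb True by force
      then have AA: "A \<in> \<A>" unfolding A_def \<A>_def by (rule imageI)
      have "(S - {v}, b + 1 - p v) \<in> C'" unfolding C'_def by (rule image_eqI[where x="(S,b)"]) (use True Sb in auto)
      then have i1: "(\<Sum>w\<in>Pow V'. if S - {v} \<subseteq> w then P' w else 0) \<le> b + 1 - p v" using P'(4) by fastforce
      have "(\<Sum>w\<in>Pow V'. if S - {v} \<subseteq> w then P' w else 0) = sum P' A"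
        unfolding A_def by (rule sum.inter_filter[symmetric]) (simp add: finV')
      then have i2: "sum P' A \<le> b + 1 - p v" using i1 by simp
      have "(\<Sum>w\<in>Pow V. if S \<subseteq> w then P w else 0) = (\<Sum>w\<in>Pow V'. if S - {v} \<subseteq> w then P' w * \<gamma> w else 0)"
        unfolding sumV using True VV'(2) by (intro sum.cong) (auto simp: Pw)
      also have "\<dots> = (\<Sum>w\<in>A. P' w * \<gamma> w)"
        unfolding A_def by (rule sum.inter_filter[symmetric]) (simp add: finV')
      also have "\<dots> \<le> max 0 (p v - 1 + sum P' A)" using g(3) AA P'(2) by auto
      also have "\<dots> \<le> b" using i2 b0 by simp
      finally show ?thesis .
    qed
  qed
  show ?case using c1 c2 c3 c4 by blast
qed



lemma violates_mono:
  assumes "violates w IC" "w \<subseteq> w'" shows "violates w' IC"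
  using assms unfolding violates_def violates_dc_def by fast

lemma violation_conflict:
  assumes "finite D" "w \<subseteq> D" "violates w IC"
  shows "\<exists>S\<in>conflict_edges D IC. S \<subseteq> w"
proof -
  define SS where "SS = {S. S \<subseteq> w \<and> forces_violation D IC S}"
  have "forces_violation D IC w"
    unfolding forces_violation_def using assms(2,3) violates_mono by blast
  then have wS: "w \<in> SS" unfolding SS_def by blast
  have "finite SS" unfolding SS_def
    by (rule finite_subset[of _ "Pow w"]) (use assms(1,2) finite_subset in auto)
  then obtain m where m: "m \<in> SS" "\<forall>b\<in>SS. b \<subseteq> m \<longrightarrow> m = b"
    using finite_has_minimal2[OF _ wS] by blast
  have "conflicting_set D IC m"
    unfolding conflicting_set_def
  proof (intro conjI allI impI notI)
    show "forces_violation D IC m" using m unfolding SS_def by blast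
  next
    fix S' assume "S' \<subset> m" "forces_violation D IC S'"
    then have "S' \<in> SS" using m unfolding SS_def by blast
    then show False using m \<open>S' \<subset> m\<close> by blast
  qed
  then show ?thesis using m unfolding SS_def conflict_edges_def by blast
qed

theorem theorem2:
  fixes D :: "('r, 'v::linorder) tuple set"
    and p :: "('r, 'v) tuple \<Rightarrow> real"
    and IC :: "('r, 'v) denial_constraint set"
  assumes "finite D"
    and "\<forall>t \<in> D. 0 \<le> p t \<and> p t \<le> 1"
    and "hypertree D (conflict_edges D IC)"
  shows "pdb_models D p IC \<longleftrightarrow>
         (\<forall>e \<in> conflict_edges D IC. (\<Sum>t \<in> e. p t) \<le> real (card e) - 1)"
proof
  assume "pdb_models D p IC"
  then obtain Pr where Pr: "is_model D p IC Pr" unfolding pdb_models_def by blast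
  have nn: "\<forall>w\<in>Pow D. 0 \<le> Pr w" and tot: "(\<Sum>w\<in>Pow D. Pr w) = 1"
    and marg: "\<forall>t\<in>D. (\<Sum>w\<in>{w\<in>Pow D. t\<in>w}. Pr w) = p t"
    and zero: "\<forall>w\<in>Pow D. violates w IC \<longrightarrow> Pr w = 0"
    using Pr unfolding is_model_def interpretation_of_def by auto
  show "\<forall>e \<in> conflict_edges D IC. (\<Sum>t \<in> e. p t) \<le> real (card e) - 1"
  proof
    fix e assume "e \<in> conflict_edges D IC"
    then have fv: "forces_violation D IC e" unfolding conflict_edges_def conflicting_set_def by blast
    then have eD: "e \<subseteq> D" unfolding forces_violation_def by blast
    have fine: "finite e" using eD assms(1) by (rule finite_subset)
    have trm: "(\<Sum>t\<in>e. if t \<in> w then Pr w else 0) \<le> (real (card e) - 1) * Pr w" if w: "w \<in> Pow D" for w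
    proof (cases "Pr w = 0")
      case True
      have "(\<Sum>t\<in>e. if t \<in> w then Pr w else 0) = 0" by (rule sum.neutral) (use True in simp)
      then show ?thesis using True by simp
    next
      case False
      then have "\<not> violates w IC" using zero w by blast
      then have "\<not> e \<subseteq> w" using fv w unfolding forces_violation_def by blast
      then obtain u where u: "u \<in> e" "u \<notin> w" by blast
      have "(\<Sum>t\<in>e. if t \<in> w then Pr w else 0) = (\<Sum>t\<in>e - {u}. if t \<in> w then Pr w else 0)"
        using sum.remove[OF fine u(1), of "\<lambda>t. if t \<in> w then Pr w else 0"] u(2) by simp
      also have "\<dots> \<le> (\<Sum>t\<in>e - {u}. Pr w)" using nn w by (intro sum_mono) auto
      also have "\<dots> = (real (card e) - 1) * Pr w"
      proof -
        have "card e \<noteq> 0" using fine u(1) by (simp add: card_eq_0_iff) blast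
        then have ce: "1 \<le> card e" by linarith
        have "card (e - {u}) = card e - 1" by (rule card_Diff_singleton[OF u(1)])
        then have "real (card (e - {u})) = real (card e) - 1" using ce by (simp only: of_nat_diff)
        moreover have "(\<Sum>t\<in>e - {u}. Pr w) = real (card (e - {u})) * Pr w" by (rule sum_constant)
        ultimately show ?thesis by simp
      qed
      finally show ?thesis .
    qed
    have "(\<Sum>t \<in> e. p t) = (\<Sum>t\<in>e. \<Sum>w\<in>Pow D. if t \<in> w then Pr w else 0)"
    proof (rule sum.cong[OF refl])
      fix t assume "t \<in> e"
      then have "t \<in> D" using eD by blast
      then show "p t = (\<Sum>w\<in>Pow D. if t \<in> w then Pr w else 0)"
      proof -
        have "(\<Sum>w\<in>{w\<in>Pow D. t\<in>w}. Pr w) = (\<Sum>w\<in>Pow D. if t \<in> w then Pr w else 0)"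
          by (rule sum.inter_filter) (simp add: assms(1))
        then show ?thesis using marg \<open>t \<in> D\<close> by simp
      qed
    qed
    also have "\<dots> = (\<Sum>w\<in>Pow D. \<Sum>t\<in>e. if t \<in> w then Pr w else 0)" by (rule sum.swap)
    also have "\<dots> \<le> (\<Sum>w\<in>Pow D. (real (card e) - 1) * Pr w)" using trm by (intro sum_mono) auto
    also have "\<dots> = real (card e) - 1" using tot by (simp add: sum_distrib_left[symmetric])
    finally show "(\<Sum>t \<in> e. p t) \<le> real (card e) - 1" .
  qed
next
  assume cond: "\<forall>e \<in> conflict_edges D IC. (\<Sum>t \<in> e. p t) \<le> real (card e) - 1"
  define C where "C = (\<lambda>e. (e, 0::real)) ` conflict_edges D IC"
  have fstC: "fst ` C = conflict_edges D IC" unfolding C_def image_image by simp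
  have h2: "\<forall>(S,b)\<in>C. S \<subseteq> D \<and> 0 \<le> b \<and> 1 - b \<le> (\<Sum>t\<in>S. 1 - p t)"
  proof
    fix x assume "x \<in> C"
    then obtain S where S: "S \<in> conflict_edges D IC" "x = (S, 0)" unfolding C_def by blast
    have "forces_violation D IC S" using S(1) unfolding conflict_edges_def conflicting_set_def by simp
    then have SD: "S \<subseteq> D" unfolding forces_violation_def by simp
    have "(\<Sum>t\<in>S. 1 - p t) = real (card S) - (\<Sum>t\<in>S. p t)" by (simp add: sum_subtractf)
    moreover have "sum p S \<le> real (card S) - 1" using cond S(1) by blast
    ultimately have "1 \<le> (\<Sum>t\<in>S. 1 - p t)" by linarith
    then show "case x of (S, b) \<Rightarrow> S \<subseteq> D \<and> 0 \<le> b \<and> 1 - b \<le> (\<Sum>t\<in>S. 1 - p t)"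
      using S SD by simp
  qed
  have h4: "gprop (fst ` C)" unfolding fstC by (rule hypertree_gprop[OF assms(3)])
  obtain P where P: "\<forall>w\<in>Pow D. 0 \<le> P w" "(\<Sum>w\<in>Pow D. P w) = 1"
    "\<forall>t\<in>D. (\<Sum>w\<in>Pow D. if t \<in> w then P w else 0) = p t"
    "\<forall>(S,b)\<in>C. (\<Sum>w\<in>Pow D. if S \<subseteq> w then P w else 0) \<le> b"
    using G[OF assms(1) h2 assms(2) h4] by blast
  have "is_model D p IC P"
    unfolding is_model_def interpretation_of_def
  proof (intro conjI ballI impI)
    show "\<And>w. w \<in> Pow D \<Longrightarrow> 0 \<le> P w" using P(1) by blast
    show "(\<Sum>w\<in>Pow D. P w) = 1" by (rule P(2))
  next
    fix t assume "t \<in> D"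
    moreover have "(\<Sum>w\<in>{w\<in>Pow D. t\<in>w}. P w) = (\<Sum>w\<in>Pow D. if t \<in> w then P w else 0)"
      by (rule sum.inter_filter) (simp add: assms(1))
    ultimately show "(\<Sum>w\<in>{w \<in> Pow D. t \<in> w}. P w) = p t" using P(3) by simp
  next
    fix w assume w: "w \<in> Pow D" "violates w IC"
    have "w \<subseteq> D" using w(1) by simp
    then obtain S where S: "S \<in> conflict_edges D IC" "S \<subseteq> w"
      using violation_conflict[OF assms(1) _ w(2)] by blast
    have S0: "(S, 0) \<in> C" using S unfolding C_def by blast
    have le: "(\<Sum>w\<in>Pow D. if S \<subseteq> w then P w else 0) \<le> 0" using bspec[OF P(4) S0] by simp
    have "(if S \<subseteq> w then P w else 0) \<le> (\<Sum>w\<in>Pow D. if S \<subseteq> w then P w else 0)"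
      by (rule member_le_sum) (use w P(1) assms(1) in auto)
    then have "P w \<le> 0" using le S(2) by simp
    moreover have "0 \<le> P w" using P(1) w(1) by blast
    ultimately show "P w = 0" by linarith
  qed
  then show "pdb_models D p IC" unfolding pdb_models_def by blast
qed


end
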